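(* Let $n\geq 1$ and let $L_1,\ldots,L_n$ be sets, each of size $4$. Then there exists a nonrepetitive sequence $s_1,\ldots,s_n$ with $s_i\in L_i$ for all $i=1,\ldots,n$.
   Context: A repetition of size $h\geq 1$ in a sequence is a block of consecutive terms of the form $x_1\ldots x_h x_1\ldots x_h$ (two adjacent identical blocks of length $h$). A sequence is nonrepetitive if it contains no repetition of any size $h\geq 1$. *)

theory Defs
  imports Main
begin

definition has_repetition :: "'a list \<Rightarrow> bool" where
  "has_repetition s \<longleftrightarrow>
     (\<exists>i h. h \<ge> 1 \<and> i + 2 * h \<le> length s \<and> (\<forall>j<h. s ! (i + j) = s ! (i + h + j)))"

definition nonrepetitive :: "'a list \<Rightarrow> bool" where
  "nonrepetitive s \<longleftrightarrow> \<not> has_repetition s"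

end

theory Submission
  imports Defs
begin

definition GG :: "(nat \<Rightarrow> 'a set) \<Rightarrow> nat \<Rightarrow> 'a list set" where
  "GG L k = {s. length s = k \<and> nonrepetitive s \<and> (\<forall>i<k. s!i \<in> L i)}"

lemma nonrep_take: "nonrepetitive s \<Longrightarrow> nonrepetitive (take m s)"
  unfolding nonrepetitive_def
proof
  assume ns: "\<not> has_repetition s" and r: "has_repetition (take m s)"
  from r obtain i h where h: "1 \<le> h" "i + 2 * h \<le> length (take m s)"
    and E: "\<forall>j<h. take m s ! (i + j) = take m s ! (i + h + j)"
    unfolding has_repetition_def by auto
  have "\<forall>j<h. s ! (i + j) = s ! (i + h + j)"
  proof (intro allI impI)
    fix j assume j: "j < h"
    have "take m s ! (i + j) = s ! (i+j)" "take m s ! (i + h + j) = s ! (i+h+j)" using h j by auto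
    with E j show "s ! (i + j) = s ! (i + h + j)" by metis
  qed
  with h ns show False unfolding has_repetition_def by auto
qed

lemma GG_finite:
  assumes "\<And>i. i < k \<Longrightarrow> finite (L i)"
  shows "finite (GG L k)"
proof -
  have "GG L k \<subseteq> {xs. set xs \<subseteq> (\<Union>i<k. L i) \<and> length xs = k}"
    unfolding GG_def by (force simp: in_set_conv_nth)
  moreover have "finite {xs. set xs \<subseteq> (\<Union>i<k. L i) \<and> length xs = k}"
    by (rule finite_lists_length_eq) (use assms in auto)
  ultimately show ?thesis by (rule finite_subset)
qed

lemma rep_suffix:
  assumes "nonrepetitive s" "has_repetition (s @ [a])"
  shows "\<exists>h. 1 \<le> h \<and> 2*h \<le> length s + 1 \<and>
     (\<forall>j<h. (s@[a]) ! (length s + 1 - 2*h + j) = (s@[a]) ! (length s + 1 - h + j))"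
proof -
  from assms(2) obtain i h where h: "h \<ge> 1" "i + 2*h \<le> length s + 1"
    and E: "\<forall>j<h. (s@[a]) ! (i + j) = (s@[a]) ! (i + h + j)"
    unfolding has_repetition_def by auto
  show ?thesis
  proof (cases "i + 2*h \<le> length s")
    case True
    have "\<forall>j<h. s ! (i + j) = s ! (i + h + j)"
    proof (intro allI impI)
      fix j assume "j < h"
      with E True show "s ! (i + j) = s ! (i + h + j)" by (auto simp: nth_append)
    qed
    with True h assms(1) show ?thesis unfolding nonrepetitive_def has_repetition_def by blast
  next
    case False
    then have "i = length s + 1 - 2*h" using h by auto
    with h E show ?thesis by (intro exI[of _ h]) (auto simp: algebra_simps)
  qed
qed

lemma sum_bound:
  fixes C :: "nat \<Rightarrow> nat"
  assumes IH: "\<And>m. m < k \<Longrightarrow> 2 * C m \<le> C (Suc m)"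
  shows "H \<le> k \<Longrightarrow> 1 \<le> H \<Longrightarrow> (\<Sum>h\<in>{1..H}. C (k+1-h)) + C (k+1-H) \<le> 2 * C k"
proof (induction H)
  case 0 then show ?case by simp
next
  case (Suc H)
  show ?case
  proof (cases "H = 0")
    case True then show ?thesis by simp
  next
    case False
    have a: "(\<Sum>h\<in>{1..H}. C (k+1-h)) + C (k+1-H) \<le> 2 * C k" using Suc False by auto
    have b: "2 * C (k - H) \<le> C (Suc (k - H))" using IH[of "k-H"] Suc False by auto
    have c: "Suc (k - H) = k + 1 - H" using Suc by auto
    have "(\<Sum>h\<in>{1..Suc H}. C (k+1-h)) = (\<Sum>h\<in>{1..H}. C (k+1-h)) + C (k - H)"
      by simp
    then show ?thesis using a b c by simp
  qed
qed

lemma sum_bound2: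
  fixes C :: "nat \<Rightarrow> nat"
  assumes IH: "\<And>m. m < k \<Longrightarrow> 2 * C m \<le> C (Suc m)" and "H \<le> k"
  shows "(\<Sum>h\<in>{1..H}. C (k+1-h)) \<le> 2 * C k"
  using sum_bound[of k C H, OF IH] assms(2) by (cases "H = 0") auto

lemma step:
  assumes finL: "\<And>i. i \<le> k \<Longrightarrow> finite (L i)" and c4: "card (L k) = 4"
    and IH: "\<And>m. m < k \<Longrightarrow> 2 * card (GG L m) \<le> card (GG L (Suc m))"
  shows "2 * card (GG L k) \<le> card (GG L (Suc k))"
proof -
  define E where "E = (\<lambda>(s,a). s@[a]) ` (GG L k \<times> L k)"
  define H where "H = (k+1) div 2"
  define B where "B h = {w\<in>E. \<forall>j<h. w!(k+1-2*h+j) = w!(k+1-h+j)}" for h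
  have finGk: "finite (GG L k)" by (rule GG_finite) (use finL in auto)
  have finGS: "finite (GG L (Suc k))" by (rule GG_finite) (use finL in auto)
  have finLk: "finite (L k)" using finL by auto
  have "inj_on (\<lambda>(s,a). s@[a]) (GG L k \<times> L k)"
    by (auto simp: inj_on_def)
  then have cE: "card E = card (GG L k) * 4"
    unfolding E_def using c4 by (simp add: card_image card_cartesian_product)
  have finE: "finite E" unfolding E_def using finGk finLk by auto
  have sub: "E \<subseteq> GG L (Suc k) \<union> (\<Union>h\<in>{1..H}. B h)"
  proof
    fix w assume "w \<in> E"
    then obtain s a where w: "w = s@[a]" and s: "s \<in> GG L k" and a: "a \<in> L k"
      unfolding E_def by auto
    have ls: "length s = k" and ns: "nonrepetitive s" and sl: "\<forall>i<k. s!i \<in> L i"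
      using s unfolding GG_def by auto
    have lists: "\<forall>i<Suc k. w!i \<in> L i"
    proof (intro allI impI)
      fix i assume "i < Suc k"
      then consider "i < k" | "i = k" by linarith
      then show "w!i \<in> L i" using sl a ls w by cases (auto simp: nth_append)
    qed
    show "w \<in> GG L (Suc k) \<union> (\<Union>h\<in>{1..H}. B h)"
    proof (cases "nonrepetitive w")
      case True
      then show ?thesis using lists w ls unfolding GG_def by auto
    next
      case False
      then obtain h where h: "1 \<le> h" "2*h \<le> length s + 1"
        "\<forall>j<h. (s@[a]) ! (length s + 1 - 2*h + j) = (s@[a]) ! (length s + 1 - h + j)"
        using rep_suffix[OF ns, of a] w unfolding nonrepetitive_def by auto
      have "h \<in> {1..H}" using h ls unfolding H_def by auto
      moreover have "w \<in> B h" using h ls w \<open>w \<in> E\<close> unfolding B_def by auto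
      ultimately show ?thesis by blast
    qed
  qed
  have cB: "card (B h) \<le> card (GG L (k+1-h))" if hH: "h \<in> {1..H}" for h
  proof (rule card_inj_on_le)
    define m where "m = k+1-h"
    have hk: "1 \<le> h" "2*h \<le> k+1" using hH unfolding H_def by auto
    show "finite (GG L (k+1-h))" by (rule GG_finite) (use finL in auto)
    show "take (k+1-h) ` B h \<subseteq> GG L (k+1-h)"
    proof
      fix t assume "t \<in> take (k+1-h) ` B h"
      then obtain w where "w \<in> E" and t: "t = take (k+1-h) w" unfolding B_def by auto
      then obtain s a where w: "w = s@[a]" and s: "s \<in> GG L k"
        unfolding E_def by auto
      have ls: "length s = k" and ns: "nonrepetitive s" and sl: "\<forall>i<k. s!i \<in> L i"
        using s unfolding GG_def by auto
      have t2: "t = take (k+1-h) s" using t w ls hk by auto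
      show "t \<in> GG L (k+1-h)" unfolding GG_def
        using t2 nonrep_take[OF ns] ls sl hk by auto
    qed
    show "inj_on (take (k+1-h)) (B h)"
    proof (rule inj_onI)
      fix w1 w2 assume w1: "w1 \<in> B h" and w2: "w2 \<in> B h" and eq: "take (k+1-h) w1 = take (k+1-h) w2"
      have len: "length w1 = k+1" "length w2 = k+1"
        using w1 w2 unfolding B_def E_def GG_def by auto
      have p1: "\<forall>j<h. w1!(k+1-2*h+j) = w1!(k+1-h+j)" and p2: "\<forall>j<h. w2!(k+1-2*h+j) = w2!(k+1-h+j)"
        using w1 w2 unfolding B_def by auto
      have lo: "w1 ! p = w2 ! p" if "p < k+1-h" for p
      proof -
        have "take (k+1-h) w1 ! p = take (k+1-h) w2 ! p" using eq by simp
        then show ?thesis using that by simp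
      qed
      show "w1 = w2"
      proof (rule nth_equalityI)
        show "length w1 = length w2" using len by simp
        fix p assume "p < length w1"
        show "w1 ! p = w2 ! p"
        proof (cases "p < k+1-h")
          case True then show ?thesis by (rule lo)
        next
          case False
          define j where "j = p - (k+1-h)"
          have j: "j < h" "p = k+1-h+j" using False \<open>p < length w1\<close> len hk unfolding j_def by auto
          have "w1 ! p = w1 ! (k+1-2*h+j)" using p1 j by auto
          also have "\<dots> = w2 ! (k+1-2*h+j)" using lo[of "k+1-2*h+j"] j hk by auto
          also have "\<dots> = w2 ! p" using p2 j by auto
          finally show ?thesis .
        qed
      qed
    qed
  qed
  have "card E \<le> card (GG L (Suc k) \<union> (\<Union>h\<in>{1..H}. B h))"
    using finGS finE by (intro card_mono[OF _ sub]) (auto simp: B_def)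
  also have "\<dots> \<le> card (GG L (Suc k)) + card (\<Union>h\<in>{1..H}. B h)" by (rule card_Un_le)
  also have "card (\<Union>h\<in>{1..H}. B h) \<le> (\<Sum>h\<in>{1..H}. card (B h))" by (rule card_UN_le) simp
  also have "\<dots> \<le> (\<Sum>h\<in>{1..H}. card (GG L (k+1-h)))" by (rule sum_mono) (rule cB)
  also have "\<dots> \<le> 2 * card (GG L k)"
    by (rule sum_bound2[of k "\<lambda>m. card (GG L m)" H]) (use IH in \<open>auto simp: H_def\<close>)
  finally show ?thesis using cE by simp
qed

lemma GG_pos:
  assumes "\<And>i. i < n \<Longrightarrow> finite (L i) \<and> card (L i) = 4"
  shows "k \<le> n \<Longrightarrow> (\<forall>m<k. 2 * card (GG L m) \<le> card (GG L (Suc m))) \<and> card (GG L k) \<ge> 1"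
proof (induction k)
  case 0
  have "GG L 0 = {[]}" unfolding GG_def nonrepetitive_def has_repetition_def by auto
  then show ?case by simp
next
  case (Suc k)
  then have I: "\<forall>m<k. 2 * card (GG L m) \<le> card (GG L (Suc m))" "card (GG L k) \<ge> 1" by auto
  have "2 * card (GG L k) \<le> card (GG L (Suc k))"
    by (rule step) (use assms Suc.prems I in auto)
  then show ?case using I less_Suc_eq by auto
qed

theorem mainTheorem1:
  fixes L :: "nat \<Rightarrow> 'a set" and n :: nat
  assumes "n \<ge> 1"
    and "\<And>i. i < n \<Longrightarrow> finite (L i) \<and> card (L i) = 4"
  shows "\<exists>s :: 'a list. length s = n \<and> nonrepetitive s \<and> (\<forall>i<n. s ! i \<in> L i)"
proof -
  have "card (GG L n) \<ge> 1" using GG_pos[OF assms(2), of n] by auto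
  then have "GG L n \<noteq> {}" by auto
  then show ?thesis unfolding GG_def by auto
qed

end
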